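(* For every $k\in\mathbb N$, $\psi_k(\mathrm{Rist}_{G_3}(\widehat k))=H_k\times\cdots\times H_k$ ($3^k$ factors). In particular, $\psi_k(\mathrm{Rist}_{G_3}(1\cdots1))=H_k\times\{e\}\times\cdots\times\{e\}$ for the vertex $1\cdots1$ of length $k$.
   Context: Let $X=\{1,2,3\}$ and $T$ the ternary rooted tree with vertex set $X^*$. $\mathrm{Aut}(T)$ is the group of root-preserving automorphisms with product left-to-right: $(gh)(u)=h(g(u))$. Sections $g|_u$ are defined by $g(uv)=g(u)\,g|_u(v)$; we write $g=(g|_1,g|_2,g|_3)\lambda_g$; $e$ is the identity. $G_3=\langle A\rangle\le\mathrm{Aut}(T)$, $A=\{a,b,c\}$, with $a=(a,b,e)(1\,2)$, $b=(e,b,c)(2\,3)$, $c=(a,e,c)(3\,1)$. For a word $w$ over $A\cup A^{-1}$, $|w|_A$ is its total exponent sum (well defined on elements of $G_3$ since relators have zero exponent sums). $H_k=\{g\in G_3:|g|_A\equiv0\pmod{2^{k+1}}\}$. $\mathrm{St}_{G_3}(\widehat k)$ is the subgroup fixing every vertex of level $k$, and $\psi_k:\mathrm{St}_{G_3}(\widehat k)\to G_3^{3^k}$, $g\mapsto (g|_u)_{u\in X^k}$ (lexicographic order of $X^k$) is the injective homomorphism. For a vertex $u$, $\mathrm{Rist}_{G_3}(u)$ is the subgroup of elements acting trivially on all vertices outside the subtree rooted at $u$; $\mathrm{Rist}_{G_3}(\widehat k)$ is the subgroup generated by $\bigcup_{|u|=k}\mathrm{Rist}_{G_3}(u)$. 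*)

theory Defs
  imports Main "HOL-Library.FuncSet"
begin

datatype letter = X1 | X2 | X3

type_synonym vertex = "letter list"
type_synonym aut = "vertex \<Rightarrow> vertex"

text \<open>Generators: a = (a,b,e)(1 2), b = (e,b,c)(2 3), c = (a,e,c)(3 1),
  with g(x v) = lambda_g(x) g|_x(v).\<close>
fun aa :: aut and bb :: aut and cc :: aut where
  "aa [] = []"
| "aa (X1 # w) = X2 # aa w"
| "aa (X2 # w) = X1 # bb w"
| "aa (X3 # w) = X3 # w"
| "bb [] = []"
| "bb (X1 # w) = X1 # w"
| "bb (X2 # w) = X3 # bb w"
| "bb (X3 # w) = X2 # cc w"
| "cc [] = []"
| "cc (X1 # w) = X3 # aa w"
| "cc (X2 # w) = X2 # w"
| "cc (X3 # w) = X1 # cc w"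

datatype gen = Ga | Gb | Gc

fun genf :: "gen \<Rightarrow> aut" where
  "genf Ga = aa" | "genf Gb = bb" | "genf Gc = cc"

fun letf :: "gen \<times> bool \<Rightarrow> aut" where
  "letf (s, False) = genf s"
| "letf (s, True) = inv (genf s)"

text \<open>Product is left-to-right: (g h)(u) = h(g(u)).\<close>
fun evalw :: "(gen \<times> bool) list \<Rightarrow> aut" where
  "evalw [] = id"
| "evalw (x # w) = evalw w \<circ> letf x"

fun expsum :: "(gen \<times> bool) list \<Rightarrow> int" where
  "expsum [] = 0"
| "expsum ((s, inverted) # w) = (if inverted then -1 else 1) + expsum w"

definition G3 :: "aut set" where
  "G3 = range evalw"

definition H :: "nat \<Rightarrow> aut set" where
  "H k = {g \<in> G3. \<exists>w. evalw w = g \<and> (2::int) ^ (k + 1) dvd expsum w}"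

text \<open>Sections: g(u v) = g(u) g|_u(v).\<close>
definition sect :: "aut \<Rightarrow> vertex \<Rightarrow> aut" where
  "sect g u = (\<lambda>v. drop (length u) (g (u @ v)))"

definition level :: "nat \<Rightarrow> vertex set" where
  "level k = {u. length u = k}"

definition St :: "nat \<Rightarrow> aut set" where
  "St k = {g \<in> G3. \<forall>u \<in> level k. g u = u}"

text \<open>psi_k(g) = (g|_u)_{u \<in> X^k}, as an extensional tuple indexed by level k.\<close>
definition psi :: "nat \<Rightarrow> aut \<Rightarrow> (vertex \<Rightarrow> aut)" where
  "psi k g = restrict (\<lambda>u. sect g u) (level k)"

definition Rist_v :: "vertex \<Rightarrow> aut set" where
  "Rist_v u = {g \<in> G3. \<forall>v. \<not> (\<exists>w. v = u @ w) \<longrightarrow> g v = v}"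

inductive_set gen_closure :: "aut set \<Rightarrow> aut set" for S where
  gc_id: "id \<in> gen_closure S"
| gc_gen: "g \<in> S \<Longrightarrow> g \<in> gen_closure S"
| gc_mult: "g \<in> gen_closure S \<Longrightarrow> h \<in> gen_closure S \<Longrightarrow> h \<circ> g \<in> gen_closure S"
| gc_inv: "g \<in> gen_closure S \<Longrightarrow> inv g \<in> gen_closure S"

definition Rist_level :: "nat \<Rightarrow> aut set" where
  "Rist_level k = gen_closure (\<Union>u \<in> level k. Rist_v u)"

end

theory Submission
  imports Defs
begin


fun ai :: aut and bi :: aut and ci :: aut where
  "ai [] = []"
| "ai (X1 # w) = X2 # bi w"
| "ai (X2 # w) = X1 # ai w"
| "ai (X3 # w) = X3 # w"
| "bi [] = []"
| "bi (X1 # w) = X1 # w"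
| "bi (X2 # w) = X3 # ci w"
| "bi (X3 # w) = X2 # bi w"
| "ci [] = []"
| "ci (X1 # w) = X3 # ci w"
| "ci (X2 # w) = X2 # w"
| "ci (X3 # w) = X1 # ai w"

lemma inv_right: "aa (ai w) = w \<and> bb (bi w) = w \<and> cc (ci w) = w"
proof (induction w)
  case (Cons x w) then show ?case by (cases x) auto
qed simp

lemma inv_left: "ai (aa w) = w \<and> bi (bb w) = w \<and> ci (cc w) = w"
proof (induction w)
  case (Cons x w) then show ?case by (cases x) auto
qed simp

lemma inv_aa: "inv aa = ai" by (rule inv_equality) (simp_all add: inv_left inv_right)
lemma inv_bb: "inv bb = bi" by (rule inv_equality) (simp_all add: inv_left inv_right)
lemma inv_cc: "inv cc = ci" by (rule inv_equality) (simp_all add: inv_left inv_right)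

fun lp :: "gen \<Rightarrow> letter \<Rightarrow> letter" where
  "lp Ga X1 = X2" | "lp Ga X2 = X1" | "lp Ga X3 = X3"
| "lp Gb X1 = X1" | "lp Gb X2 = X3" | "lp Gb X3 = X2"
| "lp Gc X1 = X3" | "lp Gc X2 = X2" | "lp Gc X3 = X1"

fun tyl :: "letter \<Rightarrow> gen" where
  "tyl X1 = Ga" | "tyl X2 = Gb" | "tyl X3 = Gc"

type_synonym word = "(gen \<times> bool) list"

fun lsec :: "gen \<times> bool \<Rightarrow> letter \<Rightarrow> word" where
  "lsec (s, False) x = (if lp s x = x then [] else [(tyl x, False)])"
| "lsec (s, True) x = (if lp s x = x then [] else [(tyl (lp s x), True)])"

lemma letf_cons: "letf l (x # v) = lp (fst l) x # evalw (lsec l x) v"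
proof -
  obtain s b where l: "l = (s, b)" by (cases l)
  show ?thesis unfolding l
    by (cases s; cases x; cases b) (simp_all add: inv_aa inv_bb inv_cc)
qed

lemma letf_nil: "letf l [] = []"
  by (cases l; cases "fst l"; cases "snd l") (auto simp: inv_aa inv_bb inv_cc)


fun rootw :: "word \<Rightarrow> letter \<Rightarrow> letter" where
  "rootw [] x = x"
| "rootw (l # w) x = rootw w (lp (fst l) x)"

fun secw :: "word \<Rightarrow> letter \<Rightarrow> word" where
  "secw [] x = []"
| "secw (l # w) x = lsec l x @ secw w (lp (fst l) x)"

lemma evalw_append: "evalw (u @ v) = evalw v \<circ> evalw u"
  by (induction u) auto

lemma evalw_nil: "evalw w [] = []"
  by (induction w) (auto simp: letf_nil)

lemma evalw_cons: "evalw w (x # v) = rootw w x # evalw (secw w x) v"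
  by (induction w arbitrary: x v) (auto simp: letf_cons evalw_append)

definition flip :: "gen \<times> bool \<Rightarrow> gen \<times> bool" where
  "flip l = (fst l, \<not> snd l)"

definition invw :: "word \<Rightarrow> word" where
  "invw w = rev (map flip w)"

lemma letf_flip1: "letf (flip l) \<circ> letf l = id"
proof -
  obtain s b where l: "l = (s, b)" by (cases l)
  show ?thesis unfolding l flip_def
    by (cases s; cases b) (auto simp: fun_eq_iff inv_aa inv_bb inv_cc inv_left inv_right)
qed

lemma letf_flip2: "letf l \<circ> letf (flip l) = id"
proof -
  obtain s b where l: "l = (s, b)" by (cases l)
  show ?thesis unfolding l flip_def
    by (cases s; cases b) (auto simp: fun_eq_iff inv_aa inv_bb inv_cc inv_left inv_right)
qed

lemma invw_cons: "invw (l # w) = invw w @ [flip l]"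
  by (simp add: invw_def)

lemma evalw_invw1: "evalw (invw w) \<circ> evalw w = id"
proof (induction w)
  case (Cons l w)
  have "evalw (invw (l # w)) \<circ> evalw (l # w)
      = letf (flip l) \<circ> (evalw (invw w) \<circ> evalw w) \<circ> letf l"
    by (simp add: invw_cons evalw_append comp_assoc)
  also have "\<dots> = id" by (simp only: Cons.IH comp_id letf_flip1)
  finally show ?case .
qed (simp add: invw_def)

lemma evalw_invw2: "evalw w \<circ> evalw (invw w) = id"
proof (induction w)
  case (Cons l w)
  have "evalw (l # w) \<circ> evalw (invw (l # w))
      = evalw w \<circ> (letf l \<circ> letf (flip l)) \<circ> evalw (invw w)"
    by (simp add: invw_cons evalw_append comp_assoc)
  also have "\<dots> = id" by (simp only: Cons.IH comp_id letf_flip2)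
  finally show ?case .
qed (simp add: invw_def)

lemma expsum_append: "expsum (u @ v) = expsum u + expsum v"
  by (induction u rule: expsum.induct) auto

lemma expsum_flip: "expsum [flip l] = - expsum [l]"
  by (cases l) (auto simp: flip_def)

lemma expsum_invw: "expsum (invw w) = - expsum w"
proof (induction w)
  case (Cons l w)
  have "expsum (l # w) = expsum [l] + expsum w"
    using expsum_append[of "[l]" w] by simp
  then show ?case using Cons by (simp add: invw_cons expsum_append expsum_flip)
qed (simp add: invw_def)

definition S3 :: "(letter \<Rightarrow> 'a::comm_monoid_add) \<Rightarrow> 'a" where
  "S3 f = f X1 + f X2 + f X3"

lemma S3_lp: "S3 (\<lambda>x. f (lp s x)) = S3 f"
  by (cases s) (simp_all add: S3_def ac_simps)

lemma len_lsec: "S3 (\<lambda>x. length (lsec l x)) = 2"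
  by (cases l; cases "fst l"; cases "snd l") (auto simp: S3_def)

lemma exp_lsec: "S3 (\<lambda>x. expsum (lsec l x)) = 2 * expsum [l]"
  by (cases l; cases "fst l"; cases "snd l") (auto simp: S3_def)

lemma S3_add: "S3 (\<lambda>x. f x + g x) = S3 f + S3 g"
  by (simp add: S3_def ac_simps)

lemma sum_len: "S3 (\<lambda>x. length (secw w x)) = 2 * length w"
proof (induction w)
  case Nil then show ?case by (simp add: S3_def)
next
  case (Cons l w)
  have "S3 (\<lambda>x. length (secw (l # w) x))
     = S3 (\<lambda>x. length (lsec l x)) + S3 (\<lambda>x. length (secw w (lp (fst l) x)))"
    by (simp add: S3_add)
  also have "\<dots> = 2 + 2 * length w" using Cons S3_lp[of "\<lambda>y. length (secw w y)" "fst l"] by (simp add: len_lsec)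
  finally show ?case by simp
qed

lemma sum_exp: "S3 (\<lambda>x. expsum (secw w x)) = 2 * expsum w"
proof (induction w)
  case Nil then show ?case by (simp add: S3_def)
next
  case (Cons l w)
  have "S3 (\<lambda>x. expsum (secw (l # w) x))
     = S3 (\<lambda>x. expsum (lsec l x)) + S3 (\<lambda>x. expsum (secw w (lp (fst l) x)))"
    by (simp add: S3_add expsum_append)
  also have "\<dots> = 2 * expsum [l] + 2 * expsum w" using Cons S3_lp[of "\<lambda>y. expsum (secw w y)" "fst l"] by (simp add: exp_lsec)
  also have "\<dots> = 2 * expsum (l # w)" using expsum_append[of "[l]" w] by simp
  finally show ?case .
qed

lemma lsec_len: "length (lsec l x) \<le> 1"
  by (cases l; cases "snd l") auto

lemma len_secw_le: "length (secw w x) \<le> length w"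
proof (induction w arbitrary: x)
  case (Cons l w) then show ?case using lsec_len[of l x] by (simp add: le_SucI add_mono) (smt (verit) Cons.IH add_le_mono le_add_same_cancel2 le_trans lsec_len plus_1_eq_Suc)
qed simp

lemma full_exp: "length (secw w x) = length w \<Longrightarrow> expsum (secw w x) = expsum w"
proof (induction w arbitrary: x)
  case (Cons l w)
  have a: "length (lsec l x) \<le> 1" by (rule lsec_len)
  have b: "length (secw w (lp (fst l) x)) \<le> length w" by (rule len_secw_le)
  from Cons.prems a b have a1: "length (lsec l x) = 1" and b1: "length (secw w (lp (fst l) x)) = length w"
    by auto
  have "expsum (lsec l x) = expsum [l]" using a1
    by (cases l; cases "snd l") (auto split: if_splits)
  then have "expsum (secw (l # w) x) = expsum [l] + expsum w"
    using Cons.IH[OF b1] by (simp add: expsum_append)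
  then show ?case using expsum_append[of "[l]" w] by simp
qed simp



lemma evalw_id_root: "evalw w = id \<Longrightarrow> rootw w x = x"
  using evalw_cons[of w x "[]"] by (simp add: fun_eq_iff)

lemma evalw_id_sec: "evalw w = id \<Longrightarrow> evalw (secw w x) = id"
proof
  fix v assume "evalw w = id"
  then have "x # v = rootw w x # evalw (secw w x) v" using evalw_cons[of w x v] by simp
  then show "evalw (secw w x) v = id v" by simp
qed

definition single :: "word \<Rightarrow> bool" where
  "single w \<longleftrightarrow> (\<exists>s. \<forall>l\<in>set w. fst l = s)"

lemma lp_fix_unique: "lp s x = x \<Longrightarrow> lp t x = x \<Longrightarrow> s = t"
  by (cases s; cases t; cases x) auto

lemma secw_empty: "secw w x = [] \<Longrightarrow> \<forall>l\<in>set w. lp (fst l) x = x"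
proof (induction w arbitrary: x)
  case (Cons l w)
  obtain s b where l: "l = (s,b)" by (cases l)
  from Cons.prems have "lsec l x = []" and r: "secw w (lp (fst l) x) = []" by auto
  then have "lp s x = x" unfolding l by (cases b) (auto split: if_splits)
  then show ?case using Cons.IH[of x] r l by auto
qed simp

lemma secw_empty_single: "secw w x = [] \<Longrightarrow> single w"
  using secw_empty[of w x] lp_fix_unique unfolding single_def by blast

lemma caseC:
  assumes IH: "\<And>w'. length w' < length w \<Longrightarrow> evalw w' = id \<Longrightarrow> expsum w' = 0"
    and rel: "evalw w = id" and ns: "\<not> single w"
  shows "expsum w = 0"
proof -
  have E: "expsum (secw w x) = (if length (secw w x) = length w then expsum w else 0)" for x
  proof (cases "length (secw w x) = length w")
    case True then show ?thesis using full_exp by simp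
  next
    case False
    then have "length (secw w x) < length w" using len_secw_le[of w x] by simp
    then show ?thesis using IH evalw_id_sec[OF rel] False by simp
  qed
  have ne: "length (secw w x) \<ge> 1" for x
    using secw_empty_single[of w x] ns by (cases "secw w x") auto
  have le: "length (secw w x) \<le> length w" for x by (rule len_secw_le)
  have SL: "length (secw w X1) + length (secw w X2) + length (secw w X3) = 2 * length w"
    using sum_len[of w] by (simp add: S3_def)
  have SE: "expsum (secw w X1) + expsum (secw w X2) + expsum (secw w X3) = 2 * expsum w"
    using sum_exp[of w] by (simp add: S3_def)
  show ?thesis
    using SL SE E[of X1] E[of X2] E[of X3] ne[of X1] ne[of X2] ne[of X3] le[of X1] le[of X2] le[of X3]
    by (simp split: if_splits)
qed

lemma evalw_cancel: "evalw (l # flip l # w) = evalw w"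
proof -
  have "evalw (l # flip l # w) = evalw w \<circ> (letf (flip l) \<circ> letf l)" by (simp add: comp_assoc)
  then show ?thesis by (simp add: letf_flip1)
qed

lemma expsum_cancel: "expsum (l # flip l # w) = expsum w"
  by (cases l) (simp add: flip_def)

lemma lp_invol: "lp s (lp s x) = x"
  by (cases s; cases x) auto

lemma full_single: "\<forall>l\<in>set w. fst l = s \<Longrightarrow> lp s x \<noteq> x \<Longrightarrow> length (secw w x) = length w"
proof (induction w arbitrary: x)
  case (Cons l w)
  obtain b where l: "l = (s,b)" using Cons.prems by (cases l) auto
  have "lp s (lp s x) \<noteq> lp s x" using Cons.prems lp_invol[of s x] by metis
  then have "length (secw w (lp s x)) = length w" using Cons by auto
  then show ?case using Cons.prems l by (cases b) auto
qed simp

lemma tyl_inj: "x \<noteq> y \<Longrightarrow> tyl x \<noteq> tyl y"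
  by (cases x; cases y) auto

lemma moved: "\<exists>x. lp s x \<noteq> x"
  by (cases s) (auto intro: exI[of _ X1] exI[of _ X2])

lemma pair_nonsingle:
  assumes "lp s x \<noteq> x"
  shows "\<not> single (secw ((s,b) # (s,b) # w) x)"
proof -
  have a: "lp s (lp s x) = x" by (rule lp_invol)
  have "lp s (lp s x) \<noteq> lp s x" using assms a by metis
  then show ?thesis using assms a tyl_inj[OF assms] tyl_inj[of x "lp s x"]
    by (cases b) (auto simp: single_def)
qed

theorem relator_expsum: "evalw w = id \<Longrightarrow> expsum w = 0"
proof (induction "length w" arbitrary: w rule: less_induct)
  case less
  show ?case
  proof (cases "single w")
    case False
    then show ?thesis using caseC less by blast
  next
    case True
    then obtain s where s: "\<forall>l\<in>set w. fst l = s" unfolding single_def by blast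
    obtain x where x: "lp s x \<noteq> x" using moved by blast
    show ?thesis
    proof (cases w)
      case Nil then show ?thesis by simp
    next
      case (Cons l1 r)
      show ?thesis
      proof (cases r)
        case Nil
        then have "rootw w x = lp s x" using Cons s by simp
        then show ?thesis using evalw_id_root[OF less.prems, of x] x by simp
      next
        case (Cons l2 r')
        note w = \<open>w = l1 # r\<close> Cons
        show ?thesis
        proof (cases "l2 = flip l1")
          case True
          then have "evalw r' = id" "expsum w = expsum r'"
            using less.prems w evalw_cancel expsum_cancel by auto
          then show ?thesis using less.hyps w by fastforce
        next
          case False
          obtain b where l1: "l1 = (s,b)" using s w by (cases l1) auto
          have l2: "l2 = (s,b)" using s w False l1 by (cases l2) (auto simp: flip_def)
          let ?w' = "secw w x"
          have ns: "\<not> single ?w'" using pair_nonsingle[OF x] w l1 l2 by simp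
          have fl: "length ?w' = length w" using full_single[OF s x] .
          have ev: "evalw ?w' = id" using evalw_id_sec[OF less.prems] .
          have "expsum ?w' = 0"
            using caseC[OF _ ev ns] less.hyps fl by metis
          then show ?thesis using full_exp[OF fl] by simp
        qed
      qed
    qed
  qed
qed



lemma wd: "evalw w1 = evalw w2 \<Longrightarrow> expsum w1 = expsum w2"
proof -
  assume e: "evalw w1 = evalw w2"
  have "evalw (w1 @ invw w2) = evalw (invw w2) \<circ> evalw w2" using e by (simp add: evalw_append)
  then have "evalw (w1 @ invw w2) = id" by (simp add: evalw_invw1)
  then have "expsum (w1 @ invw w2) = 0" by (rule relator_expsum)
  then show ?thesis by (simp add: expsum_append expsum_invw)
qed

definition ex :: "aut \<Rightarrow> int" where
  "ex g = expsum (SOME w. evalw w = g)"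

lemma ex_evalw[simp]: "ex (evalw w) = expsum w"
proof -
  have "evalw (SOME w'. evalw w' = evalw w) = evalw w" by (rule someI) simp
  then show ?thesis unfolding ex_def by (rule wd)
qed

lemma H_iff: "g \<in> H k \<longleftrightarrow> g \<in> G3 \<and> (2::int) ^ (k + 1) dvd ex g"
  unfolding H_def G3_def by (auto dest: wd)

lemma G3_evalw[simp]: "evalw w \<in> G3" unfolding G3_def by simp

lemma G3_E: "g \<in> G3 \<Longrightarrow> (\<And>w. g = evalw w \<Longrightarrow> P) \<Longrightarrow> P"
  unfolding G3_def by blast

lemma id_G3[simp]: "id \<in> G3" using G3_evalw[of "[]"] by simp

lemma comp_G3: "g \<in> G3 \<Longrightarrow> h \<in> G3 \<Longrightarrow> h \<circ> g \<in> G3"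
  by (metis G3_E G3_evalw evalw_append)

lemma inv_evalw: "inv (evalw w) = evalw (invw w)"
  by (rule inv_equality) (simp_all add: pointfree_idE evalw_invw1 evalw_invw2)

lemma inv_G3: "g \<in> G3 \<Longrightarrow> inv g \<in> G3"
  by (metis G3_E G3_evalw inv_evalw)

lemma bij_G3: "g \<in> G3 \<Longrightarrow> bij g"
  by (metis G3_E bij_betw_def evalw_invw1 evalw_invw2 o_bij)

lemma ex_comp: "g \<in> G3 \<Longrightarrow> h \<in> G3 \<Longrightarrow> ex (h \<circ> g) = ex g + ex h"
  by (metis G3_E evalw_append ex_evalw expsum_append)

lemma ex_inv: "g \<in> G3 \<Longrightarrow> ex (inv g) = - ex g"
  by (metis G3_E ex_evalw expsum_invw inv_evalw)

lemma ex_id[simp]: "ex id = 0" using ex_evalw[of "[]"] by simp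

lemma H_id[simp]: "id \<in> H k" by (simp add: H_iff)

lemma H_comp: "g \<in> H k \<Longrightarrow> h \<in> H k \<Longrightarrow> h \<circ> g \<in> H k"
  by (simp add: H_iff comp_G3 ex_comp)

lemma H_inv: "g \<in> H k \<Longrightarrow> inv g \<in> H k"
  by (simp add: H_iff inv_G3 ex_inv)

definition trip :: "(letter \<Rightarrow> letter) \<Rightarrow> letter \<times> letter \<times> letter" where
  "trip f = (f X1, f X2, f X3)"

lemma parity_root:
  "(even (length w) \<longrightarrow> trip (rootw w) \<in> {(X1,X2,X3),(X2,X3,X1),(X3,X1,X2)})
 \<and> (odd (length w) \<longrightarrow> trip (rootw w) \<in> {(X2,X1,X3),(X1,X3,X2),(X3,X2,X1)})"
proof (induction w)
  case Nil then show ?case by (simp add: trip_def)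
next
  case (Cons l w)
  have t: "trip (rootw (l # w)) = (case fst l of
      Ga \<Rightarrow> (rootw w X2, rootw w X1, rootw w X3)
    | Gb \<Rightarrow> (rootw w X1, rootw w X3, rootw w X2)
    | Gc \<Rightarrow> (rootw w X3, rootw w X2, rootw w X1))"
    by (cases "fst l") (simp_all add: trip_def)
  show ?case using Cons unfolding t by (cases "fst l") (auto simp: trip_def)
qed

lemma expsum_parity: "even (expsum w) \<longleftrightarrow> even (length w)"
  by (induction w rule: expsum.induct) auto

lemma root_id_even: "(\<And>x. rootw w x = x) \<Longrightarrow> even (expsum w)"
  using parity_root[of w] by (auto simp: trip_def expsum_parity)

fun secwu :: "word \<Rightarrow> vertex \<Rightarrow> word" where
  "secwu w [] = w"
| "secwu w (x # u) = secwu (secw w x) u"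

lemma evalw_app: "evalw w (u @ v) = evalw w u @ evalw (secwu w u) v"
  by (induction u arbitrary: w) (auto simp: evalw_cons evalw_nil)

lemma len_evalw[simp]: "length (evalw w u) = length u"
  by (induction u arbitrary: w) (auto simp: evalw_cons evalw_nil)

lemma sect_evalw: "sect (evalw w) u = evalw (secwu w u)"
  unfolding sect_def by (simp add: evalw_app fun_eq_iff)

lemma lemZ: "(\<And>v. length v = k \<Longrightarrow> expsum (secwu w v) = 0) \<Longrightarrow> expsum w = 0"
proof (induction k arbitrary: w)
  case 0 then show ?case using "0.prems"[of "[]"] by simp
next
  case (Suc k)
  have "expsum (secw w x) = 0" for x
    using Suc.IH[of "secw w x"] Suc.prems[of "x # _"] by simp
  then show ?case using sum_exp[of w] by (simp add: S3_def)
qed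

lemma lemD: "length u0 = k \<Longrightarrow> (\<And>v. length v = k \<Longrightarrow> v \<noteq> u0 \<Longrightarrow> expsum (secwu w v) = 0)
   \<Longrightarrow> expsum (secwu w u0) = 2 ^ k * expsum w"
proof (induction u0 arbitrary: w k)
  case Nil then show ?case by simp
next
  case (Cons x u)
  then obtain k' where k: "k = Suc k'" "length u = k'" by auto
  have z: "expsum (secw w y) = 0" if "y \<noteq> x" for y
    using lemZ[of k' "secw w y"] Cons.prems(2)[of "y # _"] k that by simp
  have IH: "expsum (secwu (secw w x) u) = 2 ^ k' * expsum (secw w x)"
    using Cons.IH[of k' "secw w x"] Cons.prems(2)[of "x # _"] k by simp
  have "expsum (secw w x) = 2 * expsum w"
    using sum_exp[of w] z by (cases x) (auto simp: S3_def)
  then show ?case using IH k by simp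
qed



fun red :: "word \<Rightarrow> word" where
  "red [] = []"
| "red (l # w) = (case red w of [] \<Rightarrow> [l] | m # r \<Rightarrow> (if m = flip l then r else l # m # r))"

lemma evalw_red: "evalw (red w) = evalw w"
proof (induction w)
  case (Cons l w)
  show ?case
  proof (cases "red w")
    case Nil
    then have "evalw w = id" using Cons.IH by (metis evalw.simps(1) red.simps(1))
    then show ?thesis using Nil by simp
  next
    case (Cons m r)
    show ?thesis
    proof (cases "m = flip l")
      case True
      have "evalw r = evalw (l # flip l # r)" by (rule evalw_cancel[symmetric])
      also have "\<dots> = evalw (l # red w)" using True Cons by simp
      also have "\<dots> = evalw (l # w)" using Cons.IH by simp
      finally show ?thesis using True Cons by simp
    next
      case False
      then have "red (l # w) = l # red w" using Cons by simp
      then show ?thesis using Cons.IH by simp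
    qed
  qed
qed simp

definition branch :: "letter \<Rightarrow> aut \<Rightarrow> aut" where
  "branch x y = (\<lambda>u. case u of [] \<Rightarrow> [] | z # v \<Rightarrow> (if z = x then x # y v else z # v))"

definition BRw :: "word \<Rightarrow> bool" where
  "BRw s \<longleftrightarrow> branch X1 (evalw s) \<in> G3"

lemma branch_by:
  assumes "rootw g X1 = X1" "rootw g X2 = X2" "rootw g X3 = X3"
    "red (secw g X1) = red s" "red (secw g X2) = []" "red (secw g X3) = []"
  shows "BRw s"
proof -
  have r: "rootw g x = x" for x using assms by (cases x) auto
  have "branch X1 (evalw s) = evalw g"
  proof
    fix u show "branch X1 (evalw s) u = evalw g u"
    proof (cases u)
      case Nil then show ?thesis by (simp add: branch_def evalw_nil)
    next
      case (Cons z v)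
      have s1: "evalw (secw g X1) = evalw s" by (metis assms(4) evalw_red)
      have s2: "evalw (secw g X2) = id" by (metis assms(5) evalw_red evalw.simps(1))
      have s3: "evalw (secw g X3) = id" by (metis assms(6) evalw_red evalw.simps(1))
      show ?thesis unfolding Cons
        by (cases z) (simp_all add: branch_def evalw_cons r s1 s2 s3)
    qed
  qed
  then show ?thesis unfolding BRw_def by simp
qed

lemma branch_comp: "branch x (h \<circ> g) = branch x h \<circ> branch x g"
  by (auto simp: branch_def fun_eq_iff split: list.splits)

lemma branch_id: "branch x id = id"
  by (auto simp: branch_def fun_eq_iff split: list.splits)

lemma BR_app: "branch x (evalw w1) \<in> G3 \<Longrightarrow> branch x (evalw w2) \<in> G3 \<Longrightarrow> branch x (evalw (w1 @ w2)) \<in> G3"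
  by (simp add: evalw_append branch_comp comp_G3)

lemma BR_inv: "branch x (evalw w) \<in> G3 \<Longrightarrow> branch x (evalw (invw w)) \<in> G3"
proof -
  assume a: "branch x (evalw w) \<in> G3"
  have "inv (branch x (evalw w)) = branch x (evalw (invw w))"
  proof (rule inv_equality)
    fix u
    have 1: "branch x (evalw (invw w)) \<circ> branch x (evalw w) = id"
      by (simp only: branch_comp[symmetric] evalw_invw1 branch_id)
    have 2: "branch x (evalw w) \<circ> branch x (evalw (invw w)) = id"
      by (simp only: branch_comp[symmetric] evalw_invw2 branch_id)
    show "branch x (evalw (invw w)) (branch x (evalw w) u) = u"
      using 1 by (simp add: pointfree_idE)
    show "branch x (evalw w) (branch x (evalw (invw w)) u) = u"
      using 2 by (simp add: pointfree_idE)
  qed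
  then show ?thesis using inv_G3[OF a] by simp
qed

lemma BRw_red: "BRw (red w) \<Longrightarrow> BRw w"
  by (simp add: BRw_def evalw_red)

lemma BRw_nil: "BRw []" by (simp add: BRw_def branch_id)

lemma BRw_inv: "BRw w \<Longrightarrow> BRw (invw w)"
  by (simp add: BRw_def BR_inv)

lemma gen0: "BRw [(Gb, False), (Ga, True)]"
  by (rule branch_by[where g="[(Gb, True), (Gc, True), (Gb, False), (Gc, False), (Gb, False), (Gc, True)]"]) (simp_all add: flip_def)

lemma gen1: "BRw [(Ga, False), (Gb, False), (Ga, True), (Ga, True)]"
  by (rule branch_by[where g="[(Ga, False), (Gc, False), (Gb, False), (Gc, True), (Gb, True), (Gc, True), (Gb, False), (Ga, True)]"]) (simp_all add: flip_def)

lemma gen2: "BRw [(Ga, False), (Ga, False), (Gb, False), (Ga, True), (Ga, True), (Ga, True)]"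
  by (rule branch_by[where g="[(Ga, False), (Gb, True), (Gc, False), (Ga, False), (Gc, True), (Gb, False), (Ga, True), (Gc, False), (Gc, True), (Ga, False), (Gc, True), (Ga, True), (Gc, False), (Ga, True), (Ga, False), (Gc, False), (Gb, False), (Gc, True), (Gb, True), (Gc, True), (Gb, False), (Ga, True)]"]) (simp_all add: flip_def)

lemma gen3: "BRw [(Gc, False), (Ga, True)]"
  by (rule branch_by[where g="[(Ga, True), (Gb, False), (Ga, False), (Gb, False), (Ga, True), (Gb, True)]"]) (simp_all add: flip_def)

lemma gen4: "BRw [(Ga, False), (Gc, False), (Ga, True), (Ga, True)]"
  by (rule branch_by[where g="[(Gc, False), (Gb, False), (Ga, True), (Gb, True), (Ga, True), (Gb, False), (Ga, False), (Gc, True)]"]) (simp_all add: flip_def)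

lemma gen5: "BRw [(Ga, False), (Ga, False), (Gc, False), (Ga, True), (Ga, True), (Ga, True)]"
  by (rule branch_by[where g="[(Ga, False), (Gb, True), (Gc, False), (Gb, False), (Gc, False), (Gb, True), (Gc, True), (Ga, True), (Ga, False), (Gb, False), (Ga, False), (Gb, False), (Ga, True), (Gb, True), (Ga, True), (Ga, True), (Ga, False), (Gc, False), (Gb, False), (Gc, True), (Gb, True), (Gc, True), (Gb, False), (Ga, True)]"]) (simp_all add: flip_def)

lemma gen6: "BRw [(Ga, False), (Ga, False), (Ga, False), (Gb, False)]"
  by (rule branch_by[where g="[(Gc, False), (Ga, True), (Gb, True), (Ga, False), (Gb, False), (Ga, False), (Gb, True), (Gc, True), (Gc, False), (Ga, True), (Gc, False), (Ga, False), (Gc, True), (Ga, False)]"]) (simp_all add: flip_def)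

lemma gen7: "BRw [(Ga, False), (Ga, False), (Ga, False), (Gc, False)]"
  by (rule branch_by[where g="[(Ga, False), (Gb, True), (Gc, False), (Gb, False), (Gc, False), (Gb, True), (Gc, True), (Ga, True), (Ga, False), (Gc, True), (Ga, False), (Gc, False), (Ga, True), (Gc, False)]"]) (simp_all add: flip_def)

lemma gen8: "BRw [(Ga, False), (Ga, False), (Ga, False), (Ga, False)]"
  by (rule branch_by[where g="[(Ga, False), (Gb, True), (Gc, False), (Gb, False), (Gc, False), (Gb, True), (Gc, True), (Ga, True), (Ga, False), (Gc, True), (Ga, False), (Gc, False), (Ga, True), (Gc, False), (Gc, True), (Ga, True), (Gb, True), (Ga, False), (Gb, False), (Ga, False), (Gb, True), (Gc, False)]"]) (simp_all add: flip_def)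

lemma gen0i: "BRw [(Ga, False), (Gb, True)]"
  using BRw_inv[OF gen0] by (simp add: invw_def flip_def)

lemma gen1i: "BRw [(Ga, False), (Ga, False), (Gb, True), (Ga, True)]"
  using BRw_inv[OF gen1] by (simp add: invw_def flip_def)

lemma gen2i: "BRw [(Ga, False), (Ga, False), (Ga, False), (Gb, True), (Ga, True), (Ga, True)]"
  using BRw_inv[OF gen2] by (simp add: invw_def flip_def)

lemma gen3i: "BRw [(Ga, False), (Gc, True)]"
  using BRw_inv[OF gen3] by (simp add: invw_def flip_def)

lemma gen4i: "BRw [(Ga, False), (Ga, False), (Gc, True), (Ga, True)]"
  using BRw_inv[OF gen4] by (simp add: invw_def flip_def)

lemma gen5i: "BRw [(Ga, False), (Ga, False), (Ga, False), (Gc, True), (Ga, True), (Ga, True)]"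
  using BRw_inv[OF gen5] by (simp add: invw_def flip_def)

lemma gen6i: "BRw [(Gb, True), (Ga, True), (Ga, True), (Ga, True)]"
  using BRw_inv[OF gen6] by (simp add: invw_def flip_def)

lemma gen7i: "BRw [(Gc, True), (Ga, True), (Ga, True), (Ga, True)]"
  using BRw_inv[OF gen7] by (simp add: invw_def flip_def)

lemma gen8i: "BRw [(Ga, True), (Ga, True), (Ga, True), (Ga, True)]"
  using BRw_inv[OF gen8] by (simp add: invw_def flip_def)

lemmas gen_facts = gen0 gen1 gen2 gen3 gen4 gen5 gen6 gen7 gen8
lemmas geni_facts = gen0i gen1i gen2i gen3i gen4i gen5i gen6i gen7i gen8i

lemma r4: "(r::nat) < 4 \<Longrightarrow> r = 0 \<or> r = 1 \<or> r = 2 \<or> r = 3" by arith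

lemma single_letter:
  assumes "r < 4"
  shows "BRw (replicate r (Ga,False) @ [l] @ invw (replicate (nat ((int r + expsum [l]) mod 4)) (Ga,False)))"
proof (rule BRw_red)
  obtain s b where l: "l = (s, b)" by (cases l)
  from r4[OF assms] show "BRw (red (replicate r (Ga,False) @ [l] @ invw (replicate (nat ((int r + expsum [l]) mod 4)) (Ga,False))))"
    unfolding l
    by (elim disjE; cases s; cases b)
       (simp_all add: flip_def invw_def BRw_nil numeral_2_eq_2 numeral_3_eq_3 gen_facts geni_facts)
qed



lemma BRw_id: "evalw w = id \<Longrightarrow> BRw w"
  by (simp add: BRw_def branch_id)

lemma BRw_cong: "evalw w = evalw w' \<Longrightarrow> BRw w \<Longrightarrow> BRw w'"
  by (simp add: BRw_def)

lemma BRw_app: "BRw w1 \<Longrightarrow> BRw w2 \<Longrightarrow> BRw (w1 @ w2)"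
  by (simp add: BRw_def BR_app)

lemma evalw_cancel_mid: "evalw (p @ invw v @ v @ q) = evalw (p @ q)"
proof -
  have "evalw (p @ invw v @ v @ q) = evalw q \<circ> (evalw v \<circ> evalw (invw v)) \<circ> evalw p"
    by (simp add: evalw_append comp_assoc)
  then show ?thesis by (simp add: evalw_invw2 evalw_append)
qed

lemma schreier: "r < 4 \<Longrightarrow>
  BRw (replicate r (Ga,False) @ w @ invw (replicate (nat ((int r + expsum w) mod 4)) (Ga,False)))"
proof (induction w arbitrary: r)
  case Nil
  have "nat (int r mod 4) = r" using Nil by simp
  then show ?case by (simp add: BRw_id evalw_append evalw_invw1)
next
  case (Cons l w)
  define r1 where "r1 = nat ((int r + expsum [l]) mod 4)"
  have r1: "r1 < 4" unfolding r1_def by simp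
  have m: "nat ((int r1 + expsum w) mod 4) = nat ((int r + expsum (l # w)) mod 4)"
  proof -
    have "expsum (l # w) = expsum [l] + expsum w" using expsum_append[of "[l]" w] by simp
    moreover have "int r1 = (int r + expsum [l]) mod 4" unfolding r1_def by simp
    ultimately show ?thesis by (simp add: mod_add_left_eq add.assoc)
  qed
  let ?A = "\<lambda>n. replicate n (Ga, False)"
  have 1: "BRw (?A r @ [l] @ invw (?A r1))" using single_letter[OF Cons.prems] unfolding r1_def .
  have 2: "BRw (?A r1 @ w @ invw (?A (nat ((int r + expsum (l # w)) mod 4))))"
    using Cons.IH[OF r1] unfolding m .
  have "BRw ((?A r @ [l]) @ invw (?A r1) @ ?A r1 @ (w @ invw (?A (nat ((int r + expsum (l # w)) mod 4)))))"
    using BRw_app[OF 1 2] by simp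
  then show ?case
    by (rule BRw_cong[rotated]) (simp only: evalw_cancel_mid, simp)
qed

lemma branch1: "g \<in> G3 \<Longrightarrow> 4 dvd ex g \<Longrightarrow> branch X1 g \<in> G3"
proof (erule G3_E)
  fix w assume g: "g = evalw w" and d: "4 dvd ex g"
  have "nat ((int 0 + expsum w) mod 4) = 0" using d g by simp
  then have "BRw w" using schreier[of 0 w] by (simp add: invw_def)
  then show ?thesis using g by (simp add: BRw_def)
qed

lemma evalw_single: "evalw [(s, False)] = genf s" "evalw [(Ga, True)] = ai"
  "evalw [(Gc, True)] = ci"
  by (simp_all add: inv_aa inv_cc)

lemma branch_any: "g \<in> G3 \<Longrightarrow> 4 dvd ex g \<Longrightarrow> branch x g \<in> G3"
proof (erule G3_E)
  fix w assume g: "g = evalw w" and d: "4 dvd ex g"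
  have aa: "aa \<in> G3" "ai \<in> G3" "cc \<in> G3" "ci \<in> G3"
    using G3_evalw[of "[(Ga,False)]"] G3_evalw[of "[(Ga,True)]"]
          G3_evalw[of "[(Gc,False)]"] G3_evalw[of "[(Gc,True)]"]
    by (simp_all add: inv_aa inv_cc)
  show ?thesis
  proof (cases x)
    case X1 then show ?thesis using branch1 g d by simp
  next
    case X2
    let ?w0 = "[(Ga, False)] @ w @ [(Ga, True)]"
    have e0: "evalw ?w0 = ai \<circ> g \<circ> aa" using g by (simp add: evalw_append inv_aa comp_assoc)
    have ex0: "ex (evalw ?w0) = ex g" using g by (simp only: ex_evalw) (simp add: expsum_append)
    have b0: "branch X1 (evalw ?w0) \<in> G3" by (rule branch1[OF G3_evalw]) (simp only: ex0 d)
    then have b: "branch X1 (ai \<circ> g \<circ> aa) \<in> G3" by (simp only: e0)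
    have "branch X2 g = aa \<circ> branch X1 (ai \<circ> g \<circ> aa) \<circ> ai"
    proof
      fix u show "branch X2 g u = (aa \<circ> branch X1 (ai \<circ> g \<circ> aa) \<circ> ai) u"
        by (cases u; cases "hd u") (auto simp: branch_def inv_left inv_right neq_Nil_conv)
    qed
    then show ?thesis using X2 b aa by (simp add: comp_G3)
  next
    case X3
    let ?w0 = "[(Gc, True)] @ w @ [(Gc, False)]"
    have e0: "evalw ?w0 = cc \<circ> g \<circ> ci" using g by (simp add: evalw_append inv_cc comp_assoc)
    have ex0: "ex (evalw ?w0) = ex g" using g by (simp only: ex_evalw) (simp add: expsum_append)
    have b0: "branch X1 (evalw ?w0) \<in> G3" by (rule branch1[OF G3_evalw]) (simp only: ex0 d)
    then have b: "branch X1 (cc \<circ> g \<circ> ci) \<in> G3" by (simp only: e0)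
    have "branch X3 g = ci \<circ> branch X1 (cc \<circ> g \<circ> ci) \<circ> cc"
    proof
      fix u show "branch X3 g u = (ci \<circ> branch X1 (cc \<circ> g \<circ> ci) \<circ> cc) u"
        by (cases u; cases "hd u") (auto simp: branch_def inv_left inv_right neq_Nil_conv)
    qed
    then show ?thesis using X3 b aa by (simp add: comp_G3)
  qed
qed



lemma G3_len: "g \<in> G3 \<Longrightarrow> length (g u) = length u"
  by (erule G3_E) simp

lemma G3_app: "g \<in> G3 \<Longrightarrow> g (u @ v) = g u @ sect g u v"
  by (erule G3_E) (simp add: evalw_app sect_evalw)

lemma G3_sect: "g \<in> G3 \<Longrightarrow> sect g u \<in> G3"
  by (erule G3_E) (simp add: sect_evalw)

lemma G3_inj: "g \<in> G3 \<Longrightarrow> inj g"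
  using bij_G3 bij_is_inj by blast

lemma sect_id: "sect id u = id"
  by (simp add: sect_def fun_eq_iff)

lemma not_prefix_same: "length v = length u \<Longrightarrow> v \<noteq> u \<Longrightarrow> \<not> (\<exists>w. v @ t = u @ w)"
  by (metis append_eq_append_conv)

lemma rist_fix: "g \<in> Rist_v u0 \<Longrightarrow> g u0 = u0"
proof (rule ccontr)
  assume g: "g \<in> Rist_v u0" and ne: "g u0 \<noteq> u0"
  then have G: "g \<in> G3" by (simp add: Rist_v_def)
  let ?v = "g u0"
  have "length ?v = length u0" using G3_len[OF G] .
  then have "\<not> (\<exists>w. ?v = u0 @ w)" using not_prefix_same[of ?v u0 "[]"] ne by simp
  then have "g ?v = ?v" using g by (simp add: Rist_v_def)
  then have "?v = u0" using G3_inj[OF G] by (simp add: inj_eq)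
  then show False using ne by simp
qed

lemma rist_other: "g \<in> Rist_v u0 \<Longrightarrow> length v = length u0 \<Longrightarrow> v \<noteq> u0 \<Longrightarrow> sect g v = id"
proof
  fix t assume g: "g \<in> Rist_v u0" and l: "length v = length u0" and ne: "v \<noteq> u0"
  have "\<not> (\<exists>w. v @ t = u0 @ w)" using not_prefix_same[OF l ne] .
  then have "g (v @ t) = v @ t" using g by (simp add: Rist_v_def)
  then show "sect g v t = id t" by (simp add: sect_def)
qed

lemma rist_St: "g \<in> Rist_v u0 \<Longrightarrow> length u0 = k \<Longrightarrow> g \<in> St k"
proof -
  assume g: "g \<in> Rist_v u0" and k: "length u0 = k"
  have "g u = u" if "u \<in> level k" for u
  proof (cases "u = u0")
    case True then show ?thesis using rist_fix[OF g] by simp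
  next
    case False
    have "length u = length u0" using that k by (simp add: level_def)
    then have "\<not> (\<exists>w. u = u0 @ w)" using not_prefix_same[of u u0 "[]"] False by simp
    then show ?thesis using g by (simp add: Rist_v_def)
  qed
  then show ?thesis using g by (simp add: St_def Rist_v_def)
qed

lemma St_root: "evalw w \<in> St k \<Longrightarrow> k \<ge> 1 \<Longrightarrow> rootw w x = x"
proof -
  assume s: "evalw w \<in> St k" and k: "k \<ge> 1"
  have "x # replicate (k - 1) X1 \<in> level k" using k by (simp add: level_def)
  then have "evalw w (x # replicate (k - 1) X1) = x # replicate (k - 1) X1"
    using s by (simp add: St_def)
  then show ?thesis by (simp add: evalw_cons)
qed

lemma D1:
  assumes g: "g \<in> Rist_v u0" and k: "length u0 = k" "k \<ge> 1"
  shows "sect g u0 \<in> H k"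
proof -
  have G: "g \<in> G3" using g by (simp add: Rist_v_def)
  then obtain w where w: "g = evalw w" by (rule G3_E)
  have z: "expsum (secwu w v) = 0" if "length v = k" "v \<noteq> u0" for v
  proof -
    have "evalw (secwu w v) = id" using rist_other[OF g] that k w by (simp add: sect_evalw)
    then show ?thesis by (rule relator_expsum)
  qed
  have e: "expsum (secwu w u0) = 2 ^ k * expsum w" using lemD[OF k(1) z] by blast
  have "rootw w x = x" for x using St_root[of w k x] rist_St[OF g k(1)] w k(2) by simp
  then have "even (expsum w)" by (rule root_id_even)
  then have "(2::int) ^ (k + 1) dvd expsum (secwu w u0)" using e by simp
  then show ?thesis using w by (simp add: H_iff sect_evalw)
qed

lemma sect_comp: "g \<in> G3 \<Longrightarrow> h \<in> G3 \<Longrightarrow> g u = u \<Longrightarrow> sect (h \<circ> g) u = sect h u \<circ> sect g u"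
proof
  fix t assume g: "g \<in> G3" and h: "h \<in> G3" and f: "g u = u"
  have "(h \<circ> g) (u @ t) = h u @ sect h u (sect g u t)"
    using G3_app[OF g, of u t] G3_app[OF h, of u] f by simp
  then show "sect (h \<circ> g) u t = (sect h u \<circ> sect g u) t"
    unfolding sect_def using G3_len[OF h, of u] by simp
qed

lemma inv_fix: "g \<in> G3 \<Longrightarrow> g u = u \<Longrightarrow> inv g u = u"
  using G3_inj by (metis inv_f_f)

lemma sect_inv: "g \<in> G3 \<Longrightarrow> g u = u \<Longrightarrow> sect (inv g) u = inv (sect g u)"
proof -
  assume g: "g \<in> G3" and f: "g u = u"
  have ig: "inv g \<in> G3" using inv_G3[OF g] .
  have f2: "inv g u = u" using inv_fix[OF g f] .
  have b: "bij g" using bij_G3[OF g] .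
  have gi: "g \<circ> inv g = id" using b surj_iff bij_is_surj by blast
  have ig2: "inv g \<circ> g = id" using b inj_iff bij_is_inj by blast
  have "sect g u \<circ> sect (inv g) u = sect (g \<circ> inv g) u" using sect_comp[OF ig g f2] by simp
  also have "\<dots> = id" by (simp only: gi sect_id)
  finally have 1: "sect g u \<circ> sect (inv g) u = id" .
  have "sect (inv g) u \<circ> sect g u = sect (inv g \<circ> g) u" using sect_comp[OF g ig f] by simp
  also have "\<dots> = id" by (simp only: ig2 sect_id)
  finally have 2: "sect (inv g) u \<circ> sect g u = id" .
  show ?thesis
    by (rule inv_equality[symmetric]) (simp_all add: pointfree_idE[OF 1] pointfree_idE[OF 2])
qed

lemma St_G3: "g \<in> St k \<Longrightarrow> g \<in> G3" by (simp add: St_def)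

lemma rist_level_main:
  "g \<in> Rist_level k \<Longrightarrow> k \<ge> 1 \<Longrightarrow> g \<in> St k \<and> (\<forall>u\<in>level k. sect g u \<in> H k)"
  unfolding Rist_level_def
proof (induction rule: gen_closure.induct)
  case gc_id
  have "\<forall>u\<in>level k. sect id u \<in> H k" by (simp only: sect_id H_id) blast
  moreover have "id \<in> St k" by (simp add: St_def)
  ultimately show ?case by blast
next
  case (gc_gen g)
  then obtain u0 where u0: "u0 \<in> level k" "g \<in> Rist_v u0" by blast
  have l: "length u0 = k" using u0 by (simp add: level_def)
  have "sect g u \<in> H k" if "u \<in> level k" for u
  proof (cases "u = u0")
    case True then show ?thesis using D1[OF u0(2) l gc_gen.prems] by simp
  next
    case False then show ?thesis using rist_other[OF u0(2)] l that by (simp add: level_def)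
  qed
  then show ?case using rist_St[OF u0(2) l] by blast
next
  case (gc_mult g h)
  then have g: "g \<in> St k" "\<forall>u\<in>level k. sect g u \<in> H k" and h: "h \<in> St k" "\<forall>u\<in>level k. sect h u \<in> H k"
    by auto
  have "h \<circ> g \<in> St k" using g h by (simp add: St_def comp_G3)
  moreover have "sect (h \<circ> g) u \<in> H k" if "u \<in> level k" for u
    using sect_comp[OF St_G3[OF g(1)] St_G3[OF h(1)], of u] g h that
    by (simp add: St_def H_comp)
  ultimately show ?case by blast
next
  case (gc_inv g)
  then have g: "g \<in> St k" "\<forall>u\<in>level k. sect g u \<in> H k" by auto
  have G: "g \<in> G3" using g by (simp add: St_def)
  have "inv g \<in> St k" using g by (simp add: St_def inv_G3 inv_fix)
  moreover have "sect (inv g) u \<in> H k" if "u \<in> level k" for u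
    using sect_inv[OF G, of u] g that by (simp add: St_def H_inv)
  ultimately show ?case by blast
qed

lemma Sm: "(2::int) ^ (length u + 1) dvd expsum w \<Longrightarrow>
  \<exists>g\<in>G3. (\<forall>v. \<not> (\<exists>t. v = u @ t) \<longrightarrow> g v = v) \<and> sect g u = evalw w \<and> 2 ^ length u * ex g = expsum w"
proof (induction u arbitrary: w)
  case Nil
  show ?case by (rule bexI[of _ "evalw w"]) (auto simp: sect_def)
next
  case (Cons x u)
  have "(2::int) ^ (length u + 1) dvd expsum w"
    using Cons.prems by (rule dvd_trans[rotated]) (simp add: le_imp_power_dvd)
  then obtain g' where g': "g' \<in> G3" "\<forall>v. \<not> (\<exists>t. v = u @ t) \<longrightarrow> g' v = v"
    "sect g' u = evalw w" "2 ^ length u * ex g' = expsum w"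
    using Cons.IH by blast
  have "(2::int) ^ length u * 4 dvd 2 ^ length u * ex g'"
    using Cons.prems g'(4) by (simp add: power_add mult.commute mult.left_commute)
  then have d4: "4 dvd ex g'" by simp
  let ?g = "branch x g'"
  have G: "?g \<in> G3" using branch_any[OF g'(1) d4] .
  have fx: "\<forall>v. \<not> (\<exists>t. v = (x # u) @ t) \<longrightarrow> ?g v = v"
  proof (intro allI impI)
    fix v assume nv: "\<not> (\<exists>t. v = (x # u) @ t)"
    show "?g v = v"
    proof (cases v)
      case Nil then show ?thesis by (simp add: branch_def)
    next
      case (Cons z v')
      show ?thesis
      proof (cases "z = x")
        case True
        then have "\<not> (\<exists>t. v' = u @ t)" using nv Cons by auto
        then show ?thesis using g'(2) Cons True by (simp add: branch_def)
      qed (simp add: branch_def Cons)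
    qed
  qed
  have sec: "sect ?g (x # u) = evalw w"
    using g'(3) by (simp add: sect_def branch_def fun_eq_iff)
  obtain wg where wg: "?g = evalw wg" using G by (rule G3_E)
  have sy: "ex (sect ?g [y]) = expsum (secw wg y)" for y
    using wg by (simp add: sect_evalw)
  have s1: "sect ?g [x] = g'" by (simp add: sect_def branch_def fun_eq_iff)
  have s2: "sect ?g [y] = id" if "y \<noteq> x" for y
    using that by (simp add: sect_def branch_def fun_eq_iff)
  have "ex g' = 2 * ex ?g"
  proof -
    have "expsum (secw wg y) = (if y = x then ex g' else 0)" for y
      using sy[of y] s1 s2[of y] by (cases "y = x") simp_all
    then show ?thesis using sum_exp[of wg] wg by (cases x) (simp_all add: S3_def)
  qed
  then have "2 ^ length (x # u) * ex ?g = expsum w" using g'(4) by simp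
  then show ?case using G fx sec by blast
qed

lemma D2:
  assumes u: "u \<in> level k" and h: "h \<in> H k"
  shows "\<exists>g\<in>Rist_v u. sect g u = h"
proof -
  obtain w where w: "h = evalw w" using h by (auto simp: H_iff elim: G3_E)
  have "(2::int) ^ (length u + 1) dvd expsum w" using h w u by (simp add: H_iff level_def)
  then obtain g where "g \<in> G3" "\<forall>v. \<not> (\<exists>t. v = u @ t) \<longrightarrow> g v = v" "sect g u = evalw w"
    using Sm by blast
  then show ?thesis using w by (auto simp: Rist_v_def)
qed



lemma UNIV_letter: "(UNIV :: letter set) = {X1, X2, X3}"
  using letter.exhaust by auto

lemma finite_level: "finite (level k)"
proof -
  have "level k = {xs. set xs \<subseteq> UNIV \<and> length xs = k}" by (simp add: level_def)
  then show ?thesis using finite_lists_length_eq[of "UNIV :: letter set" k] by (simp add: UNIV_letter)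
qed

lemma build:
  assumes k: "k \<ge> 1" and f: "f \<in> PiE (level k) (\<lambda>_. H k)"
  shows "set L \<subseteq> level k \<Longrightarrow> \<exists>g\<in>Rist_level k. \<forall>u\<in>level k. sect g u = (if u \<in> set L then f u else id)"
proof (induction L)
  case Nil
  have "id \<in> Rist_level k" unfolding Rist_level_def by (rule gc_id)
  moreover have "\<forall>u\<in>level k. sect id u = (if u \<in> set [] then f u else id)"
    by (simp only: sect_id list.set(1) empty_iff if_False) blast
  ultimately show ?case by blast
next
  case (Cons u L)
  then obtain g where g: "g \<in> Rist_level k" "\<forall>v\<in>level k. sect g v = (if v \<in> set L then f v else id)"
    by auto
  show ?case
  proof (cases "u \<in> set L")
    case True
    then have e: "set (u # L) = set L" by auto
    show ?thesis using g unfolding e by blast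
  next
    case False
    have u: "u \<in> level k" using Cons.prems by simp
    have "f u \<in> H k" using f u by (rule PiE_mem)
    then obtain gu where gu: "gu \<in> Rist_v u" "sect gu u = f u" using D2[OF u] by blast
    have gst: "g \<in> St k" using rist_level_main[OF g(1) k] by blast
    have guG: "gu \<in> G3" using gu by (simp add: Rist_v_def)
    have gG: "g \<in> G3" using gst by (simp add: St_def)
    have guR: "gu \<in> Rist_level k" unfolding Rist_level_def using gu u by (blast intro: gc_gen)
    have "gu \<circ> g \<in> Rist_level k" using g(1) guR unfolding Rist_level_def by (rule gc_mult)
    moreover have "sect (gu \<circ> g) v = (if v \<in> set (u # L) then f v else id)" if v: "v \<in> level k" for v
    proof -
      have "g v = v" using gst v by (simp add: St_def)
      then have e: "sect (gu \<circ> g) v = sect gu v \<circ> sect g v" using sect_comp[OF gG guG] by simp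
      show ?thesis
      proof (cases "v = u")
        case True then show ?thesis using e gu(2) g(2) v False by simp
      next
        case ne: False
        have "length v = length u" using u v by (simp add: level_def)
        then have "sect gu v = id" using rist_other[OF gu(1)] ne by simp
        then show ?thesis using e g(2) v ne by simp
      qed
    qed
    ultimately show ?thesis by blast
  qed
qed

theorem theorem5p5:
  fixes k :: nat
  assumes "k \<ge> 1"
  shows "Rist_level k \<subseteq> St k
       \<and> psi k ` Rist_level k = PiE (level k) (\<lambda>_. H k)
       \<and> psi k ` Rist_v (replicate k X1) =
           {f \<in> PiE (level k) (\<lambda>_. H k \<union> {id}).
              f (replicate k X1) \<in> H k \<and>
              (\<forall>u \<in> level k. u \<noteq> replicate k X1 \<longrightarrow> f u = id)}"
proof (intro conjI)
  note k = assms
  show "Rist_level k \<subseteq> St k" using rist_level_main[OF _ k] by blast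
  show "psi k ` Rist_level k = PiE (level k) (\<lambda>_. H k)"
  proof
    show "psi k ` Rist_level k \<subseteq> PiE (level k) (\<lambda>_. H k)"
      using rist_level_main[OF _ k] by (auto simp: psi_def restrict_PiE_iff)
  next
    show "PiE (level k) (\<lambda>_. H k) \<subseteq> psi k ` Rist_level k"
    proof
      fix f assume f: "f \<in> PiE (level k) (\<lambda>_. H k)"
      obtain L where L: "set L = level k" using finite_list[OF finite_level] by blast
      obtain g where g: "g \<in> Rist_level k" "\<forall>u\<in>level k. sect g u = (if u \<in> set L then f u else id)"
        using build[OF k f, of L] L by auto
      have "psi k g = f"
      proof
        fix u show "psi k g u = f u"
          using g(2) L PiE_arb[OF f, of u] by (cases "u \<in> level k") (auto simp: psi_def)
      qed
      then show "f \<in> psi k ` Rist_level k" using g(1) by blast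
    qed
  qed
  let ?u0 = "replicate k X1"
  have u0: "?u0 \<in> level k" by (simp add: level_def)
  have lu0: "length ?u0 = k" by simp
  show "psi k ` Rist_v ?u0 =
           {f \<in> PiE (level k) (\<lambda>_. H k \<union> {id}).
              f ?u0 \<in> H k \<and> (\<forall>u \<in> level k. u \<noteq> ?u0 \<longrightarrow> f u = id)}"
  proof
    show "psi k ` Rist_v ?u0 \<subseteq> {f \<in> PiE (level k) (\<lambda>_. H k \<union> {id}).
              f ?u0 \<in> H k \<and> (\<forall>u \<in> level k. u \<noteq> ?u0 \<longrightarrow> f u = id)}"
    proof
      fix f assume "f \<in> psi k ` Rist_v ?u0"
      then obtain g where g: "g \<in> Rist_v ?u0" and f: "f = psi k g" by blast
      have oth: "sect g u = id" if "u \<in> level k" "u \<noteq> ?u0" for u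
        using rist_other[OF g] that by (simp add: level_def)
      have h0: "sect g ?u0 \<in> H k" using D1[OF g lu0 k] .
      show "f \<in> {f \<in> PiE (level k) (\<lambda>_. H k \<union> {id}).
              f ?u0 \<in> H k \<and> (\<forall>u \<in> level k. u \<noteq> ?u0 \<longrightarrow> f u = id)}"
        using oth h0 u0 unfolding f psi_def by (auto simp: restrict_PiE_iff)
    qed
  next
    show "{f \<in> PiE (level k) (\<lambda>_. H k \<union> {id}).
              f ?u0 \<in> H k \<and> (\<forall>u \<in> level k. u \<noteq> ?u0 \<longrightarrow> f u = id)} \<subseteq> psi k ` Rist_v ?u0"
    proof
      fix f assume f: "f \<in> {f \<in> PiE (level k) (\<lambda>_. H k \<union> {id}).
              f ?u0 \<in> H k \<and> (\<forall>u \<in> level k. u \<noteq> ?u0 \<longrightarrow> f u = id)}"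
      then obtain g where g: "g \<in> Rist_v ?u0" "sect g ?u0 = f ?u0" using D2[OF u0] by blast
      have "psi k g = f"
      proof
        fix u show "psi k g u = f u"
        proof (cases "u \<in> level k")
          case True
          show ?thesis
          proof (cases "u = ?u0")
            case True then show ?thesis using g \<open>u \<in> level k\<close> by (simp add: psi_def)
          next
            case False
            then have "sect g u = id" using rist_other[OF g(1)] \<open>u \<in> level k\<close> by (simp add: level_def)
            then show ?thesis using f False \<open>u \<in> level k\<close> by (simp add: psi_def)
          qed
        next
          case False
          have "f \<in> PiE (level k) (\<lambda>_. H k \<union> {id})" using f by blast
          then have "f u = undefined" using PiE_arb False by metis
          then show ?thesis using False by (simp add: psi_def)
        qed
      qed
      then show "f \<in> psi k ` Rist_v ?u0" using g(1) by blast
    qed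
  qed
qed


end
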